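(* Let $F$ be a fixed real $3\times 3$ matrix of rank two. For a symmetric $3\times 3$ matrix $\omega^*$, define $$G(\omega^* ) = \frac{1}{2}\operatorname{tr}(F\omega^*F^{\mathrm T}\omega^* )\,F - F\omega^*F^{\mathrm T}\omega^*F.$$ Regard the nine entries $(G(\omega^* ))_{ij}$, $1\le i,j\le 3$, as polynomials in the six independent entries of $\omega^*$. Then at most three of these polynomials are linearly independent (over coefficients depending only on $F$). That is, the linear span of $\{(G(\omega^* ))_{ij}\}_{i,j=1}^{3}$ has dimension at most $3$.
   Context: In the paper's application, $F$ is a fundamental matrix and $\omega^* = KK^{\mathrm T}$ for an upper-triangular camera calibration matrix $K$. The equation $G(\omega^* ) = 0_{3\times 3}$ is then a system of self-calibration constraints on the entries of $\omega^*$. *)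

theory Defs
  imports "HOL-Analysis.Analysis" "HOL-Library.Function_Algebras"
begin

definition sym_of6 :: "real^6 \<Rightarrow> real^3^3" where
  "sym_of6 x = vector [vector [x$1, x$2, x$3],
                       vector [x$2, x$4, x$5],
                       vector [x$3, x$5, x$6]]"

definition Gmap :: "real^3^3 \<Rightarrow> real^3^3 \<Rightarrow> real^3^3" where
  "Gmap F \<omega> = ((1/2) * trace (F ** \<omega> ** transpose F ** \<omega>)) *\<^sub>R F
                - F ** \<omega> ** transpose F ** \<omega> ** F"

definition fscale :: "real \<Rightarrow> ('a \<Rightarrow> real) \<Rightarrow> ('a \<Rightarrow> real)" where
  "fscale c f = (\<lambda>x. c * f x)"

end

theory Submission
  imports Defs
begin

lemma msub_l: "(A::real^'n^'m) ** (B - C) = A ** B - A ** C"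
  by (simp add: matrix_matrix_mult_def vec_eq_iff sum_subtractf algebra_simps)
lemma msub_r: "((A::real^'n^'m) - B) ** C = A ** C - B ** C"
  by (simp add: matrix_matrix_mult_def vec_eq_iff sum_subtractf algebra_simps)

lemma rank2_factor:
  fixes F :: "real^3^3"
  assumes "rank F = 2"
  shows "\<exists>(C::real^2^3) (D::real^3^2). F = C ** D"
proof -
  have d: "dim (rows F) = 2" using assms by (simp add: row_rank_def)
  obtain B where B: "B \<subseteq> rows F" "independent B" "rows F \<subseteq> span B" "card B = dim (rows F)"
    using basis_exists by blast
  then obtain b1 b2 where b: "B = {b1, b2}" "b1 \<noteq> b2" using d by (metis card_2_iff)
  have "\<forall>i. \<exists>u. F $ i = u b1 *\<^sub>R b1 + u b2 *\<^sub>R b2"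
  proof
    fix i
    have "F $ i \<in> rows F" by (auto simp: rows_def row_def)
    then have "F $ i \<in> span B" using B by blast
    then obtain u where "F $ i = (\<Sum>v\<in>B. u v *\<^sub>R v)" using span_finite[of B] b by auto
    then show "\<exists>u. F $ i = u b1 *\<^sub>R b1 + u b2 *\<^sub>R b2" using b by auto
  qed
  then obtain u where u: "\<And>i. F $ i = u i b1 *\<^sub>R b1 + u i b2 *\<^sub>R b2" by metis
  define C :: "real^2^3" where "C = (\<chi> i k. if k = 1 then u i b1 else u i b2)"
  define D :: "real^3^2" where "D = (\<chi> k. if k = 1 then b1 else b2)"
  have "F = C ** D"
  proof (rule vec_eq_iff[THEN iffD2], rule allI, rule vec_eq_iff[THEN iffD2], rule allI)
    fix i j
    have "(C ** D) $ i $ j = (\<Sum>k\<in>UNIV. C $ i $ k * D $ k $ j)"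
      by (simp add: matrix_matrix_mult_def)
    also have "\<dots> = C $ i $ 1 * D $ 1 $ j + C $ i $ 2 * D $ 2 $ j" by (rule sum_2)
    also have "\<dots> = u i b1 * b1 $ j + u i b2 * b2 $ j" by (simp add: C_def D_def)
    also have "\<dots> = F $ i $ j" by (simp add: u)
    finally show "F $ i $ j = (C ** D) $ i $ j" by simp
  qed
  then show ?thesis by blast
qed

lemma G_decomp:
  fixes C :: "real^2^3" and D :: "real^3^2" and w :: "real^3^3"
  shows "Gmap (C ** D) w =
     (let Y = (1/2 * trace ((D ** w ** transpose D) ** (transpose C ** w ** C))) *\<^sub>R mat 1
              - (D ** w ** transpose D) ** (transpose C ** w ** C)
      in C ** Y ** D)"
proof -
  define P where "P = D ** w ** transpose D"
  define Q where "Q = transpose C ** w ** C"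
  have e1: "C ** D ** w ** transpose (C ** D) ** w = C ** (P ** transpose C ** w)"
    unfolding P_def matrix_transpose_mul matrix_mul_assoc ..
  have e2: "(P ** transpose C ** w) ** C = P ** Q"
    unfolding Q_def matrix_mul_assoc ..
  have tr: "trace (C ** D ** w ** transpose (C ** D) ** w) = trace (P ** Q)"
    unfolding e1 trace_mul_sym[of C] e2 ..
  have m: "C ** D ** w ** transpose (C ** D) ** w ** (C ** D) = C ** (P ** Q) ** D"
    unfolding P_def Q_def matrix_transpose_mul matrix_mul_assoc ..
  have k: "C ** ((1/2 * trace (P ** Q)) *\<^sub>R mat 1 - P ** Q) ** D
        = (1/2 * trace (P ** Q)) *\<^sub>R (C ** D) - C ** (P ** Q) ** D"
    unfolding msub_l msub_r matrix_scalar_ac scalar_matrix_assoc[symmetric] matrix_mul_rid ..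
  show ?thesis
    unfolding Gmap_def tr m Let_def P_def[symmetric] Q_def[symmetric] k ..
qed

lemma entry22:
  fixes Y :: "real^2^2"
  assumes "trace Y = 0"
  shows "Y $ 2 $ 2 = - Y $ 1 $ 1"
  using assms by (simp add: trace_def sum_2)

lemma CYD_entry:
  fixes C :: "real^2^3" and D :: "real^3^2" and Y :: "real^2^2"
  assumes "trace Y = 0"
  shows "(C ** Y ** D) $ i $ j = Y $ 1 $ 1 * (C$i$1 * D$1$j - C$i$2 * D$2$j)
            + Y $ 1 $ 2 * (C$i$1 * D$2$j) + Y $ 2 $ 1 * (C$i$2 * D$1$j)"
proof -
  have "(C ** Y ** D) $ i $ j = (\<Sum>l\<in>UNIV. (\<Sum>k\<in>UNIV. C$i$k * Y$k$l) * D$l$j)"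
    by (simp add: matrix_matrix_mult_def)
  also have "\<dots> = (C$i$1 * Y$1$1 + C$i$2 * Y$2$1) * D$1$j + (C$i$1 * Y$1$2 + C$i$2 * Y$2$2) * D$2$j"
    by (simp add: sum_2)
  also have "\<dots> = Y $ 1 $ 1 * (C$i$1 * D$1$j - C$i$2 * D$2$j)
            + Y $ 1 $ 2 * (C$i$1 * D$2$j) + Y $ 2 $ 1 * (C$i$2 * D$1$j)"
    using entry22[OF assms] by (simp add: algebra_simps)
  finally show ?thesis .
qed

lemma trace_Y0:
  fixes M :: "real^2^2"
  shows "trace ((1/2 * trace M) *\<^sub>R mat 1 - M) = 0"
  by (simp add: trace_def sum_2 mat_def field_simps)

theorem proposition3:
  fixes F :: "real^3^3"
  assumes "rank F = 2"
  shows "vector_space.dim fscale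
           (module.span fscale {(\<lambda>x. Gmap F (sym_of6 x) $ i $ j) | i j. True}) \<le> 3"
proof -
  interpret V: vector_space fscale
    by unfold_locales (auto simp: fscale_def algebra_simps fun_eq_iff)
  obtain C :: "real^2^3" and D :: "real^3^2" where F: "F = C ** D"
    using rank2_factor[OF assms] by blast
  define Y :: "real^6 \<Rightarrow> real^2^2" where "Y x =
     (let M = (D ** sym_of6 x ** transpose D) ** (transpose C ** sym_of6 x ** C)
      in (1/2 * trace M) *\<^sub>R mat 1 - M)" for x
  have GY: "Gmap F (sym_of6 x) = C ** Y x ** D" for x
    unfolding F G_decomp Y_def Let_def by simp
  have trY: "trace (Y x) = 0" for x
    unfolding Y_def Let_def by (rule trace_Y0)
  define y1 where "y1 = (\<lambda>x. Y x $ 1 $ 1)"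
  define y2 where "y2 = (\<lambda>x. Y x $ 1 $ 2)"
  define y3 where "y3 = (\<lambda>x. Y x $ 2 $ 1)"
  have sub: "{(\<lambda>x. Gmap F (sym_of6 x) $ i $ j) | i j. True} \<subseteq> V.span {y1, y2, y3}"
  proof clarify
    fix i j
    have eq: "(\<lambda>x. Gmap F (sym_of6 x) $ i $ j) =
      fscale (C$i$1 * D$1$j - C$i$2 * D$2$j) y1 + fscale (C$i$1 * D$2$j) y2
      + fscale (C$i$2 * D$1$j) y3"
      by (simp add: fun_eq_iff GY CYD_entry[OF trY] fscale_def y1_def y2_def y3_def algebra_simps)
    show "(\<lambda>x. Gmap F (sym_of6 x) $ i $ j) \<in> V.span {y1, y2, y3}"
      unfolding eq
      by (intro V.span_add V.span_scale V.span_base) auto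
  qed
  have "V.dim (V.span {(\<lambda>x. Gmap F (sym_of6 x) $ i $ j) | i j. True}) \<le> card {y1, y2, y3}"
    by (rule V.dim_le_card) (use V.span_minimal[OF sub] V.subspace_span in \<open>auto\<close>)
  also have "\<dots> \<le> 3" by (simp add: card_insert_le_m1)
  finally show ?thesis .
qed

end
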